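(* Let $C$ be an $A$-code of length $l$ having a basis of divisors consisting of one element. Then $C$ is isodual if and only if $l\le 2$ and either $C$ is self-dual ($C=C^\perp$) or $C=C^{\perp R}$.
   Context: Let $\mathbb{F}$ be a finite field, $f(x)\in\mathbb{F}[x]$ monic of degree $m$, $A=\mathbb{F}[x]/\langle f(x)\rangle$. An $A$-code of length $l$ is an $A$-submodule of $A^l$; $C^\perp=\{a\in A^l:\sum_ia_ic_i=0\ \forall c\in C\}$ and $C^{\perp R}=\{(c_l,\ldots,c_1):(c_1,\ldots,c_l)\in C^\perp\}$. $C$ is isodual if $C^\perp$ is the image of $C$ under some permutation of coordinates. For $u\in A^l$, $L_{\mathrm{ind}}(u)$ is the smallest index of a nonzero entry and $L_{\mathrm{coef}}(u)$ that entry. For nonzero $C$, $L_{\mathrm{ind}}(C)=\min_{u\in C}L_{\mathrm{ind}}(u)$; $L_{\mathrm{coef}}(C)$ is the monic polynomial $g$ of minimum degree such that some $c\in C$ has $L_{\mathrm{ind}}(c)=L_{\mathrm{ind}}(C)$ and $L_{\mathrm{coef}}(c)=g$ (such $c$ is a leading element). $C^{(1)}=C$, $C^{(n+1)}=\{c\in C^{(n)}:L_{\mathrm{ind}}(c)>L_{\mathrm{ind}}(C^{(n)})\}$ while $C^{(n)}\ne0$; with $k$ largest such that $C^{(k)}\ne0$, a tuple $(g^{(1)},\dots,g^{(k)})$ with $g^{(j)}$ a leading element of $C^{(j)}$ is a basis of divisors. *)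

theory Defs
  imports "HOL-Computational_Algebra.Polynomial" "HOL-Combinatorics.Permutations"
begin

text \<open>The ring A = F[x]/(f) is represented by canonical representatives:
  polynomials p with p mod f = p; multiplication is reduced mod f.
  Vectors in A^l are functions nat => 'a poly, coordinates 0..l-1 (the
  paper's coordinates 1..l shifted by one), zero outside.\<close>

definition ringA :: "'a::field poly \<Rightarrow> 'a poly set" where
  "ringA f = {p. p mod f = p}"

definition vecs :: "'a::field poly \<Rightarrow> nat \<Rightarrow> (nat \<Rightarrow> 'a poly) set" where
  "vecs f l = {u. (\<forall>i<l. u i \<in> ringA f) \<and> (\<forall>i\<ge>l. u i = 0)}"

definition smultA :: "'a::field poly \<Rightarrow> 'a poly \<Rightarrow> (nat \<Rightarrow> 'a poly) \<Rightarrow> (nat \<Rightarrow> 'a poly)" where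
  "smultA f a u = (\<lambda>i. (a * u i) mod f)"

definition is_A_code :: "'a::field poly \<Rightarrow> nat \<Rightarrow> (nat \<Rightarrow> 'a poly) set \<Rightarrow> bool" where
  "is_A_code f l C \<longleftrightarrow> C \<subseteq> vecs f l \<and> (\<lambda>_. 0) \<in> C \<and>
     (\<forall>u\<in>C. \<forall>v\<in>C. (\<lambda>i. u i + v i) \<in> C) \<and>
     (\<forall>a\<in>ringA f. \<forall>u\<in>C. smultA f a u \<in> C)"

definition dual :: "'a::field poly \<Rightarrow> nat \<Rightarrow> (nat \<Rightarrow> 'a poly) set \<Rightarrow> (nat \<Rightarrow> 'a poly) set" where
  "dual f l C = {a \<in> vecs f l. \<forall>c\<in>C. (\<Sum>i<l. a i * c i) mod f = 0}"

definition revvec :: "nat \<Rightarrow> (nat \<Rightarrow> 'a::zero) \<Rightarrow> (nat \<Rightarrow> 'a)" where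
  "revvec l u = (\<lambda>i. if i < l then u (l - 1 - i) else 0)"

definition dualR :: "'a::field poly \<Rightarrow> nat \<Rightarrow> (nat \<Rightarrow> 'a poly) set \<Rightarrow> (nat \<Rightarrow> 'a poly) set" where
  "dualR f l C = revvec l ` dual f l C"

definition isodual :: "'a::field poly \<Rightarrow> nat \<Rightarrow> (nat \<Rightarrow> 'a poly) set \<Rightarrow> bool" where
  "isodual f l C \<longleftrightarrow> (\<exists>\<sigma>. \<sigma> permutes {..<l} \<and> dual f l C = (\<lambda>c. c \<circ> \<sigma>) ` C)"

definition Lind :: "(nat \<Rightarrow> 'a::zero) \<Rightarrow> nat" where
  "Lind u = (LEAST i. u i \<noteq> 0)"

definition LindC :: "(nat \<Rightarrow> 'a::zero) set \<Rightarrow> nat" where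
  "LindC C = (LEAST j. \<exists>u\<in>C. u \<noteq> (\<lambda>_. 0) \<and> Lind u = j)"

definition next_code :: "(nat \<Rightarrow> 'a::zero) set \<Rightarrow> (nat \<Rightarrow> 'a) set" where
  "next_code C = {c \<in> C. c = (\<lambda>_. 0) \<or> Lind c > LindC C}"

text \<open>filt C n = C^(n) for n \<ge> 1.\<close>
definition filt :: "(nat \<Rightarrow> 'a::zero) set \<Rightarrow> nat \<Rightarrow> (nat \<Rightarrow> 'a) set" where
  "filt C n = (next_code ^^ (n - 1)) C"

definition nonzero_code :: "(nat \<Rightarrow> 'a::zero) set \<Rightarrow> bool" where
  "nonzero_code C \<longleftrightarrow> (\<exists>u\<in>C. u \<noteq> (\<lambda>_. 0))"

text \<open>A basis of divisors has k elements, k the largest index with C^(k) nonzero.\<close>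
definition basis_of_divisors_size :: "(nat \<Rightarrow> 'a::zero) set \<Rightarrow> nat \<Rightarrow> bool" where
  "basis_of_divisors_size C k \<longleftrightarrow> k \<ge> 1 \<and> nonzero_code (filt C k) \<and> \<not> nonzero_code (filt C (k + 1))"

end

theory Submission
  imports Defs
begin

definition rsig :: "nat \<Rightarrow> nat \<Rightarrow> nat" where
  "rsig l = (\<lambda>i. if i < l then l - 1 - i else i)"

lemma rsig_permutes: "rsig l permutes {..<l}"
proof -
  have inv: "rsig l (rsig l i) = i" for i by (simp add: rsig_def)
  show ?thesis unfolding permutes_def
    by (metis inv lessThan_iff rsig_def)
qed

lemma rsig_comp: "c \<in> vecs f l \<Longrightarrow> c \<circ> rsig l = revvec l c"
  by (auto simp: fun_eq_iff rsig_def revvec_def vecs_def)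

lemma revvec_vecs: "c \<in> vecs f l \<Longrightarrow> revvec l c \<in> vecs f l"
  by (auto simp: revvec_def vecs_def)

lemma revvec_invol: "c \<in> vecs f l \<Longrightarrow> revvec l (revvec l c) = c"
  by (auto simp: fun_eq_iff revvec_def vecs_def)

lemma small_perm:
  assumes "l \<le> 2" "\<sigma> permutes {..<l}"
  shows "\<sigma> = id \<or> \<sigma> = rsig l"
proof -
  have out: "\<And>i. i \<ge> l \<Longrightarrow> \<sigma> i = i" using assms(2) permutes_not_in by fastforce
  have inS: "\<And>i. i < l \<Longrightarrow> \<sigma> i < l" using assms(2) permutes_in_image by fastforce
  have inj: "inj \<sigma>" using assms(2) permutes_inj by blast
  consider "l = 0" | "l = 1" | "l = 2" using assms(1) by linarith
  then show ?thesis
  proof cases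
    case 1 then show ?thesis using out by (auto simp: fun_eq_iff)
  next
    case 2
    then have "\<sigma> 0 = 0" using inS by fastforce
    have "\<sigma> x = x" for x
    proof (cases "x = 0")
      case False then show ?thesis using out 2 by simp
    qed (use \<open>\<sigma> 0 = 0\<close> in simp)
    then have "\<sigma> = id" by (auto simp: fun_eq_iff)
    then show ?thesis by simp
  next
    case 3
    have a: "\<sigma> 0 < 2" "\<sigma> 1 < 2" using inS 3 by auto
    have b: "\<sigma> 0 \<noteq> \<sigma> 1" using inj by (metis injD zero_neq_one)
    show ?thesis
    proof (cases "\<sigma> 0 = 0")
      case True
      then have "\<sigma> 1 = 1" using a b by linarith
      have "\<sigma> x = x" for x
        using True \<open>\<sigma> 1 = 1\<close> out[of x] 3 by (cases "x = 0"; cases "x = 1") auto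
      then have "\<sigma> = id" by (auto simp: fun_eq_iff)
      then show ?thesis by simp
    next
      case False
      then have "\<sigma> 0 = 1" "\<sigma> 1 = 0" using a b by linarith+
      then have "\<sigma> x = rsig l x" for x
        using out[of x] 3 by (cases "x = 0"; cases "x = 1") (auto simp: rsig_def)
      then have "\<sigma> = rsig l" by (auto simp: fun_eq_iff)
      then show ?thesis by simp
    qed
  qed
qed

lemma ringA_minus: "x \<in> ringA f \<Longrightarrow> - x \<in> ringA f"
  by (simp add: ringA_def)

lemma key_l:
  fixes f :: "'a::{finite,field} poly" and l :: nat
    and C :: "(nat \<Rightarrow> 'a poly) set"
  assumes mon: "lead_coeff f = 1"
    and code: "is_A_code f l C"
    and bas: "basis_of_divisors_size C 1"
    and iso: "isodual f l C"
  shows "l \<le> 2"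
proof (rule ccontr)
  assume "\<not> l \<le> 2"
  hence l3: "l \<ge> 3" by simp
  have sub: "C \<subseteq> vecs f l" and zC: "(\<lambda>_. 0) \<in> C"
    and add: "\<And>u v. u \<in> C \<Longrightarrow> v \<in> C \<Longrightarrow> (\<lambda>i. u i + v i) \<in> C"
    and sm: "\<And>a u. a \<in> ringA f \<Longrightarrow> u \<in> C \<Longrightarrow> smultA f a u \<in> C"
    using code unfolding is_A_code_def by blast+
  have nz: "\<exists>u\<in>C. u \<noteq> (\<lambda>_. 0)" and nn: "\<forall>u\<in>next_code C. u = (\<lambda>_. 0)"
    using bas unfolding basis_of_divisors_size_def filt_def nonzero_code_def by auto
  define j where "j = LindC C"
  have Lj: "Lind c = j" if "c \<in> C" "c \<noteq> (\<lambda>_. 0)" for c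
  proof -
    have "j \<le> Lind c" unfolding j_def LindC_def using that by (auto intro: Least_le)
    moreover have "\<not> Lind c > j" using nn that unfolding next_code_def j_def by auto
    ultimately show ?thesis by simp
  qed
  have Lnz: "c (Lind c) \<noteq> 0" if "c \<noteq> (\<lambda>_. 0)" for c :: "nat \<Rightarrow> 'a poly"
  proof -
    have "\<not> (\<forall>i. c i = 0)" using that by auto
    then obtain i where "c i \<noteq> 0" by blast
    then show ?thesis unfolding Lind_def by (rule LeastI)
  qed
  have Lbel: "c i = 0" if "i < Lind c" for c :: "nat \<Rightarrow> 'a poly" and i
    using not_less_Least that unfolding Lind_def by blast
  have below: "c i = 0" if "c \<in> C" "i < j" for c i
    using Lj Lbel that by (cases "c = (\<lambda>_. 0)") auto
  have atj: "c j \<noteq> 0" if "c \<in> C" "c \<noteq> (\<lambda>_. 0)" for c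
    using Lj Lnz that by metis
  have vecsE: "u i \<in> ringA f" "\<And>i. i \<ge> l \<Longrightarrow> u i = 0" if "u \<in> vecs f l" "i < l" for u i
    using that unfolding vecs_def by auto
  have fne1: "f \<noteq> 1"
  proof
    assume "f = 1"
    obtain u where u: "u \<in> C" "u \<noteq> (\<lambda>_. 0)" using nz by auto
    then obtain i where "u i \<noteq> 0" by auto
    moreover have "u i mod f = u i" using u sub unfolding vecs_def ringA_def
      by (cases "i < l") auto
    ultimately show False using \<open>f = 1\<close> by simp
  qed
  have f0: "f \<noteq> 0" using mon by auto
  have degf: "degree f \<ge> 1"
  proof (rule ccontr)
    assume "\<not> degree f \<ge> 1"
    then have "degree f = 0" by simp
    then have "f = [:lead_coeff f:]" by (metis degree_0_id)
    then show False using mon fne1 by (simp add: pCons_one)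
  qed
  have one_A: "1 \<in> ringA f" unfolding ringA_def using degf by (simp add: mod_poly_less)
  have redf: "x mod f = x \<Longrightarrow> x = 0 \<or> degree x < degree f" for x
    using degree_mod_less[OF f0, of x] by auto
  obtain c0 where c0: "c0 \<in> C" "c0 \<noteq> (\<lambda>_. 0)"
    and c0min: "\<And>c. c \<in> C \<and> c \<noteq> (\<lambda>_. 0) \<Longrightarrow> degree (c0 j) \<le> degree (c j)"
    using ex_has_least_nat[of "\<lambda>c. c \<in> C \<and> c \<noteq> (\<lambda>_. 0)" _ "\<lambda>c. degree (c j)"] nz by blast
  have allmod: "c i mod f = c i" if "c \<in> C" for c i
    using that sub unfolding vecs_def ringA_def by (cases "i < l") auto
  have gen: "\<exists>q. \<forall>i. c i = (q * c0 i) mod f" if cC: "c \<in> C" for c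
  proof -
    define q where "q = c j div c0 j"
    define r0 where "r0 = c j mod c0 j"
    define a where "a = (- q) mod f"
    have aA: "a \<in> ringA f" unfolding a_def ringA_def by simp
    define w where "w = (\<lambda>i. c i + smultA f a c0 i)"
    have wC: "w \<in> C" unfolding w_def using add[OF cC sm[OF aA c0(1)]] .
    have "w j = w j mod f" using allmod[OF wC] by simp
    also have "\<dots> = (c j + (- q) * c0 j) mod f"
      unfolding w_def smultA_def a_def by (simp add: mod_simps)
    also have "c j + (- q) * c0 j = r0" unfolding q_def r0_def
      using minus_div_mult_eq_mod[of "c j" "c0 j"] by (simp add: algebra_simps)
    finally have wj: "w j = r0 mod f" .
    have c0j: "c0 j \<noteq> 0" using atj c0 by blast
    have "r0 = 0 \<or> degree r0 < degree (c0 j)" unfolding r0_def using degree_mod_less[OF c0j] by auto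
    moreover have "c0 j = 0 \<or> degree (c0 j) < degree f" using redf allmod[OF c0(1)] by blast
    ultimately have r0f: "r0 mod f = r0" using c0j by (auto intro: mod_poly_less)
    have w0: "w = (\<lambda>_. 0)"
    proof (rule ccontr)
      assume wn: "w \<noteq> (\<lambda>_. 0)"
      then have "w j \<noteq> 0" using atj wC by blast
      then have "r0 \<noteq> 0" using wj r0f by simp
      then have "degree r0 < degree (c0 j)" unfolding r0_def using degree_mod_less[OF c0j] by auto
      moreover have "degree (c0 j) \<le> degree (w j)" using c0min wC wn by blast
      ultimately show False using wj r0f by simp
    qed
    have "c i = (q * c0 i) mod f" for i
    proof -
      have "c i + (a * c0 i) mod f = 0" using fun_cong[OF w0, of i] unfolding w_def smultA_def by simp
      then have "c i = - ((a * c0 i) mod f)" by (simp add: eq_neg_iff_add_eq_0)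
      then have "c i = (- ((a * c0 i) mod f)) mod f" using allmod[OF cC, of i] by simp
      also have "\<dots> = (- (a * c0 i)) mod f" by (simp add: mod_simps)
      also have "\<dots> = ((- a) * c0 i) mod f" by simp
      also have "\<dots> = (((- a) mod f) * c0 i) mod f" by (simp add: mod_mult_left_eq)
      also have "(- a) mod f = q mod f" unfolding a_def
        using mod_minus_eq[of "-q" f] by simp
      also have "((q mod f) * c0 i) mod f = (q * c0 i) mod f" by (simp add: mod_mult_left_eq)
      finally show ?thesis .
    qed
    then show ?thesis by blast
  qed
  have indual: "d \<in> dual f l C" if dv: "d \<in> vecs f l" and ds: "(\<Sum>i<l. d i * c0 i) mod f = 0" for d
  proof -
    have "(\<Sum>i<l. d i * c i) mod f = 0" if cC: "c \<in> C" for c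
    proof -
      obtain q where q: "\<And>i. c i = (q * c0 i) mod f" using gen[OF cC] by blast
      have "(\<Sum>i<l. d i * c i) mod f = (\<Sum>i<l. (d i * c i) mod f) mod f"
        by (simp only: mod_sum_eq)
      also have "\<dots> = (\<Sum>i<l. (d i * (q * c0 i)) mod f) mod f"
        unfolding q by (simp only: mod_mult_right_eq)
      also have "\<dots> = (\<Sum>i<l. d i * (q * c0 i)) mod f" by (simp only: mod_sum_eq)
      also have "(\<Sum>i<l. d i * (q * c0 i)) = q * (\<Sum>i<l. d i * c0 i)"
        by (simp add: sum_distrib_left mult.left_commute)
      also have "(q * (\<Sum>i<l. d i * c0 i)) mod f = (q * ((\<Sum>i<l. d i * c0 i) mod f)) mod f"
        by (simp add: mod_simps)
      finally show ?thesis using ds by simp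
    qed
    then show ?thesis unfolding dual_def using dv by blast
  qed
  obtain \<sigma> where sig: "\<sigma> permutes {..<l}" and D: "dual f l C = (\<lambda>c. c \<circ> \<sigma>) ` C"
    using iso unfolding isodual_def by blast
  have jl: "j < l"
  proof (rule ccontr)
    assume "\<not> j < l"
    then have "c0 j = 0" using c0(1) sub unfolding vecs_def by auto
    then show False using atj c0 by blast
  qed
  obtain k where k: "k < l" "\<sigma> k = j"
  proof -
    have "j \<in> \<sigma> ` {..<l}" using permutes_image[OF sig] jl by simp
    then obtain k' where "k' < l" "\<sigma> k' = j" by blast
    then show ?thesis by (rule that)
  qed
  have Dk: "d k \<noteq> 0" if "d \<in> dual f l C" "d \<noteq> (\<lambda>_. 0)" for d
  proof -
    have "d \<in> (\<lambda>c. c \<circ> \<sigma>) ` C" using that(1) unfolding D .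
    then obtain c where c: "c \<in> C" "d = c \<circ> \<sigma>" by (rule imageE) simp
    have "c \<noteq> (\<lambda>_. 0)"
    proof
      assume "c = (\<lambda>_. 0)"
      then have "d = (\<lambda>_. 0)" using c(2) by (simp add: comp_def)
      then show False using that(2) by simp
    qed
    then have "c j \<noteq> 0" using atj c(1) by blast
    then show ?thesis using c(2) k(2) by simp
  qed
  obtain p q where pq: "p < l" "q < l" "p \<noteq> q" "p \<noteq> k" "q \<noteq> k"
  proof (cases "k = 0")
    case True then show ?thesis using that[of 1 2] l3 by simp
  next
    case False
    show ?thesis
    proof (cases "k = 1")
      case True then show ?thesis using that[of 0 2] l3 by simp
    next
      case False then show ?thesis using that[of 0 1] l3 \<open>k \<noteq> 0\<close> by simp
    qed
  qed
  have c0A: "c0 i \<in> ringA f" if "i < l" for i using c0(1) sub that unfolding vecs_def by auto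
  show False
  proof (cases "c0 p = 0")
    case True
    define d where "d = (\<lambda>i. if i = p then (1::'a poly) else 0)"
    have "d \<in> vecs f l" unfolding d_def vecs_def using one_A pq by (auto simp: ringA_def)
    moreover have "(\<Sum>i<l. d i * c0 i) mod f = 0"
    proof -
      have "(\<Sum>i<l. d i * c0 i) = (\<Sum>i<l. if i = p then c0 i else 0)"
        by (rule sum.cong) (auto simp: d_def)
      also have "\<dots> = c0 p" using pq by simp
      finally show ?thesis using True by simp
    qed
    ultimately have "d \<in> dual f l C" by (rule indual)
    moreover have "d \<noteq> (\<lambda>_. 0)"
    proof
      assume "d = (\<lambda>_. 0)"
      then have "d p = 0" by simp
      then show False unfolding d_def by simp
    qed
    ultimately have "d k \<noteq> 0" by (rule Dk)
    then show False using pq unfolding d_def by simp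
  next
    case False
    define d where "d = (\<lambda>i. if i = p then c0 q else if i = q then - c0 p else 0)"
    have "d \<in> vecs f l" unfolding d_def vecs_def using c0A ringA_minus pq
      by (auto simp: ringA_def)
    moreover have "(\<Sum>i<l. d i * c0 i) mod f = 0"
    proof -
      have "(\<Sum>i<l. d i * c0 i) = (\<Sum>i\<in>{p,q}. d i * c0 i)"
        by (rule sum.mono_neutral_right) (use pq in \<open>auto simp: d_def\<close>)
      also have "\<dots> = 0" using pq by (simp add: d_def)
      finally show ?thesis by simp
    qed
    ultimately have "d \<in> dual f l C" by (rule indual)
    moreover have "d \<noteq> (\<lambda>_. 0)"
    proof
      assume "d = (\<lambda>_. 0)"
      then have "d q = 0" by simp
      then show False unfolding d_def using False pq by simp
    qed
    ultimately have "d k \<noteq> 0" by (rule Dk)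
    then show False using pq unfolding d_def by simp
  qed
qed

lemma img_rev: "A \<subseteq> vecs f l \<Longrightarrow> (\<lambda>c. c \<circ> rsig l) ` A = revvec l ` A"
  using rsig_comp by (metis (no_types, lifting) image_cong subsetD)

lemma img_rev2: "A \<subseteq> vecs f l \<Longrightarrow> revvec l ` revvec l ` A = A"
proof -
  assume A: "A \<subseteq> vecs f l"
  have "revvec l ` revvec l ` A = (\<lambda>c. revvec l (revvec l c)) ` A" by (simp add: image_image)
  also have "\<dots> = id ` A" using A revvec_invol by (intro image_cong) auto
  finally show ?thesis by simp
qed

lemma dual_vecs: "dual f l C \<subseteq> vecs f l" unfolding dual_def by auto

theorem mainTheorem5:
  fixes f :: "'a::{finite,field} poly" and l :: nat
    and C :: "(nat \<Rightarrow> 'a poly) set"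
  assumes "lead_coeff f = 1"
    and "is_A_code f l C"
    and "basis_of_divisors_size C 1"
  shows "isodual f l C \<longleftrightarrow> l \<le> 2 \<and> (C = dual f l C \<or> C = dualR f l C)"
proof
  have sub: "C \<subseteq> vecs f l" using assms(2) unfolding is_A_code_def by blast
  assume iso: "isodual f l C"
  have l2: "l \<le> 2" by (rule key_l[OF assms iso])
  obtain \<sigma> where sig: "\<sigma> permutes {..<l}" and D: "dual f l C = (\<lambda>c. c \<circ> \<sigma>) ` C"
    using iso unfolding isodual_def by blast
  from small_perm[OF l2 sig] show "l \<le> 2 \<and> (C = dual f l C \<or> C = dualR f l C)"
  proof
    assume "\<sigma> = id"
    then have "dual f l C = C" using D by simp
    then show ?thesis using l2 by simp
  next
    assume "\<sigma> = rsig l"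
    then have "dual f l C = revvec l ` C" using D img_rev[OF sub] by simp
    then have "dualR f l C = C" unfolding dualR_def using img_rev2[OF sub] by simp
    then show ?thesis using l2 by simp
  qed
next
  have sub: "C \<subseteq> vecs f l" using assms(2) unfolding is_A_code_def by blast
  assume "l \<le> 2 \<and> (C = dual f l C \<or> C = dualR f l C)"
  then consider "C = dual f l C" | "C = dualR f l C" by blast
  then show "isodual f l C"
  proof cases
    case 1
    have "id permutes {..<l}" by (rule permutes_id)
    moreover have "dual f l C = (\<lambda>c. c \<circ> id) ` C" using 1 by simp
    ultimately show ?thesis unfolding isodual_def by blast
  next
    case 2
    have "revvec l ` C = dual f l C"
      using 2 img_rev2[OF dual_vecs[of f l C]] unfolding dualR_def by metis
    then have "dual f l C = (\<lambda>c. c \<circ> rsig l) ` C" using img_rev[OF sub] by simp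
    then show ?thesis unfolding isodual_def using rsig_permutes by blast
  qed
qed

end
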